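(* Let $\lambda,\mu$ be partitions and $x$ an indeterminate, and put $$X_{\lambda\mu}(x):=\prod_{(i,j)\in[\mu]}(j-i-x)\prod_{(i,j)\in [\lambda]}\biggl((j-i-\mu_1+x)\prod_{1\le k\le\mu_1}\frac{j-i+\bar{\mu}_k-k+1+x}{j-i+\bar{\mu}_k-k+x}\biggr).$$ Then $X_{\lambda\mu}(x)=X_{\mu\lambda}(-x)$.
   Context: For a partition $\lambda$, $[\lambda]=\{(i,j): i\ge1,\ 1\le j\le\lambda_i\}$ is its diagram and $\bar\lambda$ is the conjugate partition ($\bar\lambda_k$ = number of $i$ with $\lambda_i\ge k$). *)

theory Defs
  imports "HOL-Computational_Algebra.Polynomial" "HOL-Computational_Algebra.Fraction_Field"
begin

definition is_partition :: "nat list \<Rightarrow> bool" where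
  "is_partition lam \<longleftrightarrow> sorted_wrt (\<ge>) lam \<and> 0 \<notin> set lam"

definition part :: "nat list \<Rightarrow> nat \<Rightarrow> nat" where
  "part lam i = (if 1 \<le> i \<and> i \<le> length lam then lam ! (i - 1) else 0)"

definition diagram :: "nat list \<Rightarrow> (nat \<times> nat) set" where
  "diagram lam = {(i, j). 1 \<le> i \<and> 1 \<le> j \<and> j \<le> part lam i}"

definition conj_part :: "nat list \<Rightarrow> nat \<Rightarrow> nat" where
  "conj_part lam k = card {i. 1 \<le> i \<and> k \<le> part lam i}"

definition Xfun :: "nat list \<Rightarrow> nat list \<Rightarrow> 'a::field \<Rightarrow> 'a" where
  "Xfun lam mu x =
     (\<Prod>(i, j)\<in>diagram mu. of_int (int j - int i) - x) *
     (\<Prod>(i, j)\<in>diagram lam.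
        (of_int (int j - int i - int (part mu 1)) + x) *
        (\<Prod>k\<in>{1..part mu 1}.
           (of_int (int j - int i + int (conj_part mu k) - int k + 1) + x) /
           (of_int (int j - int i + int (conj_part mu k) - int k) + x)))"

text \<open>The indeterminate x, as an element of the field of rational functions Q(x).\<close>
definition indet :: "rat poly fract" where
  "indet = Fract [:0, 1:] 1"

end

theory Submission
  imports Defs
begin


lemma part_mono:
  assumes "is_partition mu" "1 \<le> i" "i \<le> i'"
  shows "part mu i' \<le> part mu i"
proof (cases "i' \<le> length mu")
  case False thus ?thesis by (simp add: part_def)
next
  case True
  show ?thesis
  proof (cases "i = i'")
    case True thus ?thesis by simp
  next
    case False
    hence "i - 1 < i' - 1" using assms by simp
    moreover have "i' - 1 < length mu" using True assms by simp
    ultimately have "mu ! (i - 1) \<ge> mu ! (i' - 1)"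
      using assms(1) unfolding is_partition_def sorted_wrt_iff_nth_less by blast
    thus ?thesis using True assms by (simp add: part_def)
  qed
qed

lemma conj_char:
  assumes "is_partition mu" "1 \<le> j"
  shows "(1 \<le> i \<and> j \<le> part mu i) \<longleftrightarrow> (1 \<le> i \<and> i \<le> conj_part mu j)"
proof -
  let ?S = "{i. 1 \<le> i \<and> j \<le> part mu i}"
  have sub: "?S \<subseteq> {1..length mu}"
    using assms(2) by (auto simp: part_def split: if_splits)
  hence fin: "finite ?S" by (rule finite_subset) simp
  have down: "i \<in> ?S" if "i' \<in> ?S" "1 \<le> i" "i \<le> i'" for i i'
    using that part_mono[OF assms(1) that(2,3)] by auto
  show ?thesis
  proof
    assume h: "1 \<le> i \<and> j \<le> part mu i"
    have "{1..i} \<subseteq> ?S" using down[of i] h by auto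
    hence "card {1..i} \<le> card ?S" using fin by (rule card_mono[rotated])
    thus "1 \<le> i \<and> i \<le> conj_part mu j" using h by (simp add: conj_part_def)
  next
    assume h: "1 \<le> i \<and> i \<le> conj_part mu j"
    show "1 \<le> i \<and> j \<le> part mu i"
    proof (rule ccontr)
      assume "\<not> ?thesis"
      hence "i \<notin> ?S" using h by auto
      have "?S \<subseteq> {1..i-1}"
      proof
        fix x assume x: "x \<in> ?S"
        have "\<not> i \<le> x" using down[OF x] h \<open>i \<notin> ?S\<close> by blast
        thus "x \<in> {1..i-1}" using x by auto
      qed
      hence "card ?S \<le> i - 1" using card_mono[of "{1..i-1}" ?S] by simp
      thus False using h unfolding conj_part_def by arith
    qed
  qed
qed

lemma diagram_eq:
  assumes "is_partition mu"
  shows "diagram mu = (\<lambda>(k, i). (i, k)) ` (SIGMA k:{1..part mu 1}. {1..conj_part mu k})"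
proof (rule set_eqI, clarify)
  fix i j
  have "(i, j) \<in> diagram mu \<longleftrightarrow> 1 \<le> j \<and> j \<le> part mu 1 \<and> 1 \<le> i \<and> i \<le> conj_part mu j"
  proof
    assume "(i, j) \<in> diagram mu"
    hence h: "1 \<le> i" "1 \<le> j" "j \<le> part mu i" by (auto simp: diagram_def)
    have "part mu i \<le> part mu 1" using part_mono[OF assms, of 1 i] h by simp
    thus "1 \<le> j \<and> j \<le> part mu 1 \<and> 1 \<le> i \<and> i \<le> conj_part mu j"
      using h conj_char[OF assms h(2), of i] by auto
  next
    assume h: "1 \<le> j \<and> j \<le> part mu 1 \<and> 1 \<le> i \<and> i \<le> conj_part mu j"
    thus "(i, j) \<in> diagram mu" using conj_char[OF assms, of j i] by (auto simp: diagram_def)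
  qed
  thus "((i, j) \<in> diagram mu) = ((i, j) \<in> (\<lambda>(k, i). (i, k)) ` (SIGMA k:{1..part mu 1}. {1..conj_part mu k}))"
    by (auto simp: image_iff)
qed

lemma finite_diagram: "is_partition mu \<Longrightarrow> finite (diagram mu)"
  by (simp add: diagram_eq)

lemma prod_diagram:
  assumes "is_partition mu"
  shows "(\<Prod>(i, j)\<in>diagram mu. f i j) = (\<Prod>k\<in>{1..part mu 1}. \<Prod>i\<in>{1..conj_part mu k}. f i k)"
proof -
  have inj: "inj_on (\<lambda>(k, i). (i, k)) (SIGMA k:{1..part mu 1}. {1..conj_part mu k})"
    by (auto simp: inj_on_def)
  show ?thesis
    unfolding diagram_eq[OF assms] prod.reindex[OF inj]
    by (subst prod.Sigma) (auto simp: case_prod_beta' comp_def)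
qed


definition G :: "'a::field \<Rightarrow> 'a" where "G z = (z + 1) * (z - 1) / (z * z)"

lemma G_minus: "G (- z) = G z"
  by (simp add: G_def algebra_simps)

lemma col_step:
  fixes a z :: "'a::field"
  assumes "z \<noteq> 0" "z - 1 \<noteq> 0" "a - 1 \<noteq> 0"
  shows "G (z - 1) * (a * (z - 1) / (z * (a - 1))) = a * (z - 1 - 1) / ((z - 1) * (a - 1))"
proof -
  define w where "w = z - 1"
  define r where "r = a - 1"
  have z: "z = w + 1" by (simp add: w_def)
  have w0: "w \<noteq> 0" "r \<noteq> 0" using assms by (auto simp: w_def r_def)
  have Gw: "G w = z * (w - 1) / (w * w)" by (simp add: G_def z)
  have "G w * (a * w / (z * r)) = a * (w - 1) / (w * r)"
    unfolding Gw using w0 assms(1) by (simp add: field_simps)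
  thus ?thesis by (simp add: w_def r_def)
qed

lemma col:
  fixes a :: "'a::field"
  assumes nz: "\<And>i::int. a - of_int i \<noteq> 0"
  shows "(\<Prod>i\<in>{1..n}. G (a - of_nat i)) = a * (a - of_nat n - 1) / ((a - of_nat n) * (a - 1))"
proof (induction n)
  case 0
  have "a \<noteq> 0" using nz[of 0] by simp
  moreover have "a - 1 \<noteq> 0" using nz[of 1] by simp
  ultimately show ?case by simp
next
  case (Suc n)
  have n1: "a - of_nat n \<noteq> 0" using nz[of "int n"] by simp
  have n2: "a - of_nat n - 1 \<noteq> 0" using nz[of "int n + 1"] by (simp add: algebra_simps)
  have n3: "a - of_nat n - 2 \<noteq> 0" using nz[of "int n + 2"] by (simp add: algebra_simps)
  have n0: "a - 1 \<noteq> 0" using nz[of 1] by simp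
  have "(\<Prod>i\<in>{1..Suc n}. G (a - of_nat i)) = G (a - of_nat (Suc n)) * (\<Prod>i\<in>{1..n}. G (a - of_nat i))"
    by (simp add: atLeastAtMostSuc_conv)
  also have "\<dots> = G (a - of_nat (Suc n)) * (a * (a - of_nat n - 1) / ((a - of_nat n) * (a - 1)))"
    using Suc by simp
  also have "\<dots> = a * (a - of_nat (Suc n) - 1) / ((a - of_nat (Suc n)) * (a - 1))"
    using col_step[OF n1 n2 n0] by (simp add: algebra_simps)
  finally show ?case .
qed

lemma tele:
  fixes b :: "'a::field"
  assumes nz: "\<And>i::int. b + of_int i \<noteq> 0"
  shows "(\<Prod>k\<in>{1..m}. (b + of_nat k) / (b + of_nat k - 1)) = (b + of_nat m) / b"
proof (induction m)
  case 0
  have "b \<noteq> 0" using nz[of 0] by simp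
  thus ?case by simp
next
  case (Suc m)
  have n1: "b + of_nat m \<noteq> 0" using nz[of "int m"] by simp
  have n0: "b \<noteq> 0" using nz[of 0] by simp
  have "(\<Prod>k\<in>{1..Suc m}. (b + of_nat k) / (b + of_nat k - 1))
      = (b + of_nat (Suc m)) / (b + of_nat (Suc m) - 1) * ((b + of_nat m) / b)"
    using Suc by (simp add: atLeastAtMostSuc_conv)
  also have "\<dots> = (b + of_nat m + 1) / (b + of_nat m) * ((b + of_nat m) / b)"
    by (simp add: algebra_simps)
  also have "\<dots> = (b + of_nat m + 1) / b" using n0 n1 by simp
  also have "\<dots> = (b + of_nat (Suc m)) / b" by (simp add: algebra_simps)
  finally show ?case .
qed



lemma key:
  fixes x :: "'a::field"
  assumes p: "is_partition mu" and H: "\<And>n::int. of_int n + x \<noteq> 0"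
  shows "(of_int (c - int (part mu 1)) + x) *
     (\<Prod>k\<in>{1..part mu 1}. (of_int (c + int (conj_part mu k) - int k + 1) + x) /
                            (of_int (c + int (conj_part mu k) - int k) + x))
   = (of_int c + x) * (\<Prod>(i, j)\<in>diagram mu. G (of_int (int j - int i - c) - x))"
proof -
  define b where "b = - (of_int c + x)"
  define m where "m = part mu 1"
  define Q where "Q k = (of_int (c + int (conj_part mu k) - int k + 1) + x) /
                            (of_int (c + int (conj_part mu k) - int k) + x)" for k
  have bnz: "b + of_int i \<noteq> 0" for i :: int
  proof
    assume "b + of_int i = 0"
    hence "of_int (c - i) + x = 0" by (simp add: b_def algebra_simps)
    thus False using H by blast
  qed
  have "(\<Prod>(i, j)\<in>diagram mu. G (of_int (int j - int i - c) - x))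
      = (\<Prod>k\<in>{1..m}. \<Prod>i\<in>{1..conj_part mu k}. G (of_int (int k - int i - c) - x))"
    unfolding m_def by (rule prod_diagram[OF p])
  also have "\<dots> = (\<Prod>k\<in>{1..m}. \<Prod>i\<in>{1..conj_part mu k}. G ((b + of_nat k) - of_nat i))"
    by (simp add: b_def algebra_simps)
  also have "\<dots> = (\<Prod>k\<in>{1..m}. (b + of_nat k) / (b + of_nat k - 1) * Q k)"
  proof (rule prod.cong[OF refl])
    fix k assume "k \<in> {1..m}"
    let ?n = "conj_part mu k"
    have nz: "(b + of_nat k) - of_int i \<noteq> 0" for i :: int
      using bnz[of "int k - i"] by (simp add: algebra_simps)
    have "(\<Prod>i\<in>{1..?n}. G ((b + of_nat k) - of_nat i)) =
       (b + of_nat k) * (b + of_nat k - of_nat ?n - 1) / ((b + of_nat k - of_nat ?n) * (b + of_nat k - 1))"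
      by (rule col[OF nz])
    also have "\<dots> = (b + of_nat k) / (b + of_nat k - 1) *
          ((b + of_nat k - of_nat ?n - 1) / (b + of_nat k - of_nat ?n))"
      by simp
    also have "(b + of_nat k - of_nat ?n - 1) / (b + of_nat k - of_nat ?n) = Q k"
    proof -
      have e1: "b + of_nat k - of_nat ?n - 1 = - (of_int (c + int ?n - int k + 1) + x)"
        by (simp add: b_def algebra_simps)
      have e2: "b + of_nat k - of_nat ?n = - (of_int (c + int ?n - int k) + x)"
        by (simp add: b_def algebra_simps)
      show ?thesis unfolding Q_def by (subst e1, subst e2) (simp only: divide_minus_left divide_minus_right minus_minus)
    qed
    finally show "(\<Prod>i\<in>{1..?n}. G ((b + of_nat k) - of_nat i)) = (b + of_nat k) / (b + of_nat k - 1) * Q k" .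
  qed
  also have "\<dots> = (b + of_nat m) / b * (\<Prod>k\<in>{1..m}. Q k)"
    by (subst prod.distrib) (simp only: tele[OF bnz])
  finally have R: "(\<Prod>(i, j)\<in>diagram mu. G (of_int (int j - int i - c) - x)) = (b + of_nat m) / b * (\<Prod>k\<in>{1..m}. Q k)" .
  have b0: "b \<noteq> 0" using bnz[of 0] by simp
  have F: "(of_int c + x) * ((b + of_nat m) / b) = of_int (c - int m) + x"
    using b0 by (simp add: b_def field_simps)
  show ?thesis unfolding R m_def[symmetric] Q_def[symmetric] by (simp only: mult.assoc[symmetric] F)
qed



lemma main:
  fixes x :: "'a::field"
  assumes pl: "is_partition lam" and pm: "is_partition mu"
    and H: "\<And>n::int. of_int n + x \<noteq> 0"
  shows "Xfun lam mu x = Xfun mu lam (- x)"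
proof -
  have H': "of_int n + - x \<noteq> 0" for n :: int
  proof
    assume "of_int n + - x = 0"
    hence "of_int (- n) + x = 0" by (simp add: algebra_simps)
    thus False using H by blast
  qed
  have S1: "Xfun lam mu x = (\<Prod>(i,j)\<in>diagram mu. of_int (int j - int i) - x) *
     (\<Prod>(i',j')\<in>diagram lam. (of_int (int j' - int i') + x) *
        (\<Prod>(i,j)\<in>diagram mu. G (of_int (int j - int i - (int j' - int i')) - x)))"
    unfolding Xfun_def
    by (intro arg_cong2[where f="(*)"] refl prod.cong) (simp_all only: split_paired_all prod.case key[OF pm H])
  have S2: "Xfun mu lam (- x) = (\<Prod>(i,j)\<in>diagram lam. of_int (int j - int i) - - x) *
     (\<Prod>(i',j')\<in>diagram mu. (of_int (int j' - int i') + - x) *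
        (\<Prod>(i,j)\<in>diagram lam. G (of_int (int j - int i - (int j' - int i')) - - x)))"
    unfolding Xfun_def
    by (intro arg_cong2[where f="(*)"] refl prod.cong) (simp_all only: split_paired_all prod.case key[OF pl H'])
  have sw: "(\<Prod>p\<in>diagram lam. \<Prod>q\<in>diagram mu. G (of_int (int (snd q) - int (fst q) - (int (snd p) - int (fst p))) - x))
      = (\<Prod>q\<in>diagram mu. \<Prod>p\<in>diagram lam. G (of_int (int (snd p) - int (fst p) - (int (snd q) - int (fst q))) - - x))"
  proof -
    have "\<And>p q. G (of_int (int (snd q) - int (fst q) - (int (snd p) - int (fst p))) - x)
       = G (of_int (int (snd p) - int (fst p) - (int (snd q) - int (fst q))) - - x)"
    proof -
      fix p q :: "nat \<times> nat"
      have "of_int (int (snd p) - int (fst p) - (int (snd q) - int (fst q))) - - x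
          = - (of_int (int (snd q) - int (fst q) - (int (snd p) - int (fst p))) - (x::'a))"
        by (simp add: algebra_simps)
      thus "G (of_int (int (snd q) - int (fst q) - (int (snd p) - int (fst p))) - x)
       = G (of_int (int (snd p) - int (fst p) - (int (snd q) - int (fst q))) - - x)"
        by (simp only: G_minus)
    qed
    thus ?thesis by (simp only: prod.swap[of _ _ "diagram lam"])
  qed
  have T1: "Xfun lam mu x = (\<Prod>q\<in>diagram mu. of_int (int (snd q) - int (fst q)) - x) *
     ((\<Prod>p\<in>diagram lam. of_int (int (snd p) - int (fst p)) + x) *
      (\<Prod>p\<in>diagram lam. \<Prod>q\<in>diagram mu. G (of_int (int (snd q) - int (fst q) - (int (snd p) - int (fst p))) - x)))"
    by (simp only: S1 split_def prod.distrib)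
  have T2: "Xfun mu lam (- x) = (\<Prod>p\<in>diagram lam. of_int (int (snd p) - int (fst p)) - - x) *
     ((\<Prod>q\<in>diagram mu. of_int (int (snd q) - int (fst q)) + - x) *
      (\<Prod>q\<in>diagram mu. \<Prod>p\<in>diagram lam. G (of_int (int (snd p) - int (fst p) - (int (snd q) - int (fst q))) - - x)))"
    by (simp only: S2 split_def prod.distrib)
  have E1: "(\<Prod>p\<in>diagram lam. of_int (int (snd p) - int (fst p)) - - x) = (\<Prod>p\<in>diagram lam. of_int (int (snd p) - int (fst p)) + x)"
    by simp
  have E2: "(\<Prod>q\<in>diagram mu. of_int (int (snd q) - int (fst q)) + - x) = (\<Prod>q\<in>diagram mu. of_int (int (snd q) - int (fst q)) - x)"
    by simp
  show ?thesis unfolding T1 T2 E1 E2 sw by (simp only: ac_simps)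
qed


lemma of_int_fract': "(of_int n :: 'a::idom fract) = Fract (of_int n) 1"
proof (cases n rule: int_cases2)
  case (nonneg k) thus ?thesis by (simp add: of_nat_fract)
next
  case (nonpos k) thus ?thesis by (simp add: of_nat_fract)
qed

lemma indet_ok: "(of_int n :: rat poly fract) + indet \<noteq> 0"
proof
  assume "(of_int n :: rat poly fract) + indet = 0"
  hence "Fract (of_int n + [:0,1::rat:]) 1 = 0"
    by (simp add: indet_def of_int_fract')
  hence "Fract (of_int n + [:0,1::rat:]) 1 = Fract 0 1" by (simp add: Zero_fract_def)
  hence "(of_int n :: rat poly) + [:0,1:] = 0" by (simp add: eq_fract)
  hence "coeff ((of_int n :: rat poly) + [:0,1:]) 1 = 0" by simp
  thus False by (simp add: of_int_poly)
qed

theorem corollary3p3: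
  assumes "is_partition lam" and "is_partition mu"
  shows "Xfun lam mu indet = Xfun mu lam (- indet)"
  by (rule main[OF assms indet_ok])

end
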